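(* Let $G$ be a finite transitive permutation group with point stabiliser $H$, let $p$ be a prime, let $S$ be a Sylow $p$-subgroup of $H$, and let $x\in H$ have order a power of $p$. (i) If $|S^G|>|S^H|^2-|S^H|+1$, then $G$ has a subdegree divisible by $p$. (ii) If $|x^G|>|x^G\cap H|^2-|x^G\cap H|+1$, then $G$ has a subdegree divisible by $p$.
   Context: $S^G$ denotes the set of $G$-conjugates of $S$ (similarly $S^H$, $x^G$). A subdegree is the size of an orbit of a point stabiliser. *)

theory Defs
  imports "HOL-Algebra.Algebra" "HOL-Computational_Algebra.Computational_Algebra"
begin

definition subgroup_conjugates :: "('a, 'b) monoid_scheme \<Rightarrow> 'a set \<Rightarrow> 'a set set" where
  "subgroup_conjugates G S = {g <#\<^bsub>G\<^esub> S #>\<^bsub>G\<^esub> inv\<^bsub>G\<^esub> g | g. g \<in> carrier G}"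

definition elem_conjugates :: "('a, 'b) monoid_scheme \<Rightarrow> 'a \<Rightarrow> 'a set" where
  "elem_conjugates G x = {g \<otimes>\<^bsub>G\<^esub> x \<otimes>\<^bsub>G\<^esub> inv\<^bsub>G\<^esub> g | g. g \<in> carrier G}"

definition is_sylow_subgroup :: "('a, 'b) monoid_scheme \<Rightarrow> nat \<Rightarrow> 'a set \<Rightarrow> 'a set \<Rightarrow> bool" where
  "is_sylow_subgroup G p H S \<longleftrightarrow> subgroup S G \<and> S \<subseteq> H \<and> card S = p ^ multiplicity p (card H)"

end

theory Submission
  imports Defs "HOL-Library.Indicator_Function"
begin


lemma comb_bound:
  fixes V :: "'v set" and \<Omega> :: "'w set" and e :: "'w \<Rightarrow> 'v set"
  assumes finV: "finite V" and finO: "finite \<Omega>"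
    and sub: "\<And>\<beta>. \<beta> \<in> \<Omega> \<Longrightarrow> e \<beta> \<subseteq> V"
    and unif: "\<And>\<beta>. \<beta> \<in> \<Omega> \<Longrightarrow> card (e \<beta>) = a"
    and reg: "\<And>v. v \<in> V \<Longrightarrow> card {\<beta>\<in>\<Omega>. v \<in> e \<beta>} = d"
    and dpos: "d > 0"
    and inter: "\<And>\<beta> \<gamma>. \<beta> \<in> \<Omega> \<Longrightarrow> \<gamma> \<in> \<Omega> \<Longrightarrow> e \<beta> \<inter> e \<gamma> \<noteq> {}"
    and Vne: "V \<noteq> {}"
  shows "card V \<le> a^2 - a + 1"
proof -
  obtain v0 where v0: "v0 \<in> V" using Vne by blast
  have "{\<beta>\<in>\<Omega>. v0 \<in> e \<beta>} \<noteq> {}" using reg[OF v0] dpos by (metis card.empty less_irrefl)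
  then obtain \<beta>0 where b0: "\<beta>0 \<in> \<Omega>" "v0 \<in> e \<beta>0" by blast
  have finE: "\<And>\<beta>. \<beta> \<in> \<Omega> \<Longrightarrow> finite (e \<beta>)" using sub finV finite_subset by blast
  have apos: "a > 0" using unif[OF b0(1)] b0 finE[OF b0(1)] by (metis card_gt_0_iff empty_iff)
  show ?thesis
  proof (cases "a = 1")
    case True
    have "V \<subseteq> e \<beta>0"
    proof
      fix v assume v: "v \<in> V"
      have "{\<beta>\<in>\<Omega>. v \<in> e \<beta>} \<noteq> {}" using reg[OF v] dpos by (metis card.empty less_irrefl)
      then obtain \<beta> where b: "\<beta> \<in> \<Omega>" "v \<in> e \<beta>" by blast
      obtain w where w: "e \<beta> = {w}" using unif[OF b(1)] True card_1_singletonE by metis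
      obtain w0 where w0: "e \<beta>0 = {w0}" using unif[OF b0(1)] True card_1_singletonE by metis
      show "v \<in> e \<beta>0" using inter[OF b(1) b0(1)] w w0 b(2) by auto
    qed
    hence "card V \<le> 1" using card_mono[OF finE[OF b0(1)]] unif[OF b0(1)] True by fastforce
    thus ?thesis using True by simp
  next
    case False
    hence a2: "a \<ge> 2" using apos by linarith
    define I where "I = (\<lambda>\<beta> v. indicator (e \<beta>) v :: real)"
    have I01: "I \<beta> v = 0 \<or> I \<beta> v = 1" for \<beta> v unfolding I_def by (simp add: indicator_def)
    have F1: "(\<Sum>v\<in>V. I \<beta> v) = real a" if "\<beta> \<in> \<Omega>" for \<beta>
    proof -
      have "(\<Sum>v\<in>V. I \<beta> v) = real (card (V \<inter> e \<beta>))"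
        unfolding I_def using finV by (simp add: indicator_def sum.If_cases Int_def)
      also have "V \<inter> e \<beta> = e \<beta>" using sub[OF that] by blast
      finally show ?thesis using unif[OF that] by simp
    qed
    have F2: "(\<Sum>\<beta>\<in>\<Omega>. I \<beta> v) = real d" if "v \<in> V" for v
    proof -
      have "(\<Sum>\<beta>\<in>\<Omega>. I \<beta> v) = real (card {\<beta>\<in>\<Omega>. v \<in> e \<beta>})"
        unfolding I_def using finO by (simp add: indicator_def sum.If_cases Int_def)
      thus ?thesis using reg[OF that] by simp
    qed
    have F3: "(\<Sum>u\<in>V. I \<beta> u * I \<gamma> u) \<ge> 1" if "\<beta> \<in> \<Omega>" "\<gamma> \<in> \<Omega>" for \<beta> \<gamma>
    proof -
      have "(\<Sum>u\<in>V. I \<beta> u * I \<gamma> u) = real (card (V \<inter> (e \<beta> \<inter> e \<gamma>)))"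
        unfolding I_def using finV by (simp add: indicator_def sum.If_cases Int_def)
      also have "V \<inter> (e \<beta> \<inter> e \<gamma>) = e \<beta> \<inter> e \<gamma>" using sub[OF that(1)] by blast
      finally show ?thesis using inter[OF that] finE[OF that(1)]
        by (metis One_nat_def Suc_leI card_gt_0_iff finite_Int of_nat_1 of_nat_le_iff)
    qed
    define b where "b = real (card V)"
    define m where "m = real (card \<Omega>)"
    define A where "A = real a"
    define D where "D = real d"
    have Dpos: "D > 0" using dpos D_def by simp
    have dbl: "m * A = b * D"
    proof -
      have "(\<Sum>\<beta>\<in>\<Omega>. \<Sum>v\<in>V. I \<beta> v) = (\<Sum>v\<in>V. \<Sum>\<beta>\<in>\<Omega>. I \<beta> v)" by (rule sum.swap)
      thus ?thesis using F1 F2 by (simp add: m_def A_def b_def D_def)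
    qed
    define t where "t = (\<lambda>u. \<Sum>\<beta>\<in>\<Omega>. I \<beta> v0 * I \<beta> u)"
    have St: "(\<Sum>u\<in>V. t u) = D * A"
    proof -
      have "(\<Sum>u\<in>V. t u) = (\<Sum>\<beta>\<in>\<Omega>. I \<beta> v0 * (\<Sum>u\<in>V. I \<beta> u))"
        unfolding t_def by (simp add: sum.swap[of _ V] sum_distrib_left)
      also have "\<dots> = (\<Sum>\<beta>\<in>\<Omega>. I \<beta> v0) * A" using F1 by (simp add: A_def sum_distrib_right)
      finally show ?thesis using F2[OF v0] D_def by simp
    qed
    have tv0: "t v0 = D"
    proof -
      have sq: "I \<beta> v0 * I \<beta> v0 = I \<beta> v0" for \<beta> using I01[of \<beta> v0] by auto
      have "t v0 = (\<Sum>\<beta>\<in>\<Omega>. I \<beta> v0)" unfolding t_def by (simp only: sq)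
      thus ?thesis using F2[OF v0] D_def by simp
    qed
    have key: "(\<Sum>u\<in>V. t u * (D - t u)) \<ge> D * (m - D)"
    proof -
      have dt: "D - t u = (\<Sum>\<gamma>\<in>\<Omega>. I \<gamma> u * (1 - I \<gamma> v0))" if "u \<in> V" for u
        using F2[OF that] unfolding t_def D_def by (simp add: sum_subtractf algebra_simps)
      have "(\<Sum>u\<in>V. t u * (D - t u)) = (\<Sum>u\<in>V. (\<Sum>\<beta>\<in>\<Omega>. I \<beta> v0 * I \<beta> u) * (\<Sum>\<gamma>\<in>\<Omega>. I \<gamma> u * (1 - I \<gamma> v0)))"
        using dt unfolding t_def by (intro sum.cong) auto
      also have "\<dots> = (\<Sum>u\<in>V. \<Sum>\<beta>\<in>\<Omega>. \<Sum>\<gamma>\<in>\<Omega>. (I \<beta> v0 * I \<beta> u) * (I \<gamma> u * (1 - I \<gamma> v0)))"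
        by (simp only: sum_product)
      also have "\<dots> = (\<Sum>\<beta>\<in>\<Omega>. \<Sum>u\<in>V. \<Sum>\<gamma>\<in>\<Omega>. (I \<beta> v0 * I \<beta> u) * (I \<gamma> u * (1 - I \<gamma> v0)))"
        by (rule sum.swap)
      also have "\<dots> = (\<Sum>\<beta>\<in>\<Omega>. \<Sum>\<gamma>\<in>\<Omega>. \<Sum>u\<in>V. (I \<beta> v0 * I \<beta> u) * (I \<gamma> u * (1 - I \<gamma> v0)))"
        by (simp only: sum.swap[of _ V])
      also have "\<dots> = (\<Sum>\<beta>\<in>\<Omega>. \<Sum>\<gamma>\<in>\<Omega>. (I \<beta> v0 * (1 - I \<gamma> v0)) * (\<Sum>u\<in>V. I \<beta> u * I \<gamma> u))"
        by (simp add: sum_distrib_left mult.commute mult.left_commute)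
      also have "\<dots> \<ge> (\<Sum>\<beta>\<in>\<Omega>. \<Sum>\<gamma>\<in>\<Omega>. I \<beta> v0 * (1 - I \<gamma> v0))"
      proof (intro sum_mono)
        fix \<beta> \<gamma> assume "\<beta> \<in> \<Omega>" "\<gamma> \<in> \<Omega>"
        moreover have "I \<beta> v0 * (1 - I \<gamma> v0) \<ge> 0" using I01[of \<beta> v0] I01[of \<gamma> v0] by auto
        ultimately show "I \<beta> v0 * (1 - I \<gamma> v0) \<le> I \<beta> v0 * (1 - I \<gamma> v0) * (\<Sum>u\<in>V. I \<beta> u * I \<gamma> u)"
          using F3 by (metis mult.right_neutral mult_left_mono)
      qed
      also have "(\<Sum>\<beta>\<in>\<Omega>. \<Sum>\<gamma>\<in>\<Omega>. I \<beta> v0 * (1 - I \<gamma> v0)) = (\<Sum>\<beta>\<in>\<Omega>. I \<beta> v0) * (\<Sum>\<gamma>\<in>\<Omega>. (1 - I \<gamma> v0))"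
        by (simp add: sum_product)
      also have "\<dots> = D * (m - D)" using F2[OF v0] by (simp add: sum_subtractf D_def m_def)
      finally show ?thesis .
    qed
    define s where "s = (\<Sum>u\<in>V. (t u)^2)"
    have H1: "s \<le> D*D*A - D*m + D*D"
    proof -
      have "(\<Sum>u\<in>V. t u * (D - t u)) = D * (\<Sum>u\<in>V. t u) - s"
        unfolding s_def by (simp add: algebra_simps power2_eq_square sum_subtractf sum_distrib_left)
      thus ?thesis using key St by (simp add: algebra_simps)
    qed
    have H2: "(A*D - D)^2 \<le> A*A*s - 2*A*D*(D*A) + b*D*D"
    proof -
      have "(A * t v0 - D)^2 \<le> (\<Sum>u\<in>V. (A * t u - D)^2)"
        by (rule member_le_sum[OF v0]) (auto simp: finV)
      also have "\<dots> = (\<Sum>u\<in>V. A*A*(t u)^2 - 2*A*D*t u + D*D)"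
        by (simp add: power2_eq_square algebra_simps)
      also have "\<dots> = A*A*s - 2*A*D*(\<Sum>u\<in>V. t u) + b*D*D"
        unfolding s_def b_def by (simp add: sum.distrib sum_subtractf flip: sum_distrib_left)
      finally show ?thesis using tv0 St by simp
    qed
    have H3: "A*A*(D*m) = A*D*D*b" using dbl by (metis mult.assoc mult.commute)
    have "D*D*((A - 1)*b) \<le> D*D*((A-1)*(A*A - A + 1))"
    proof -
      have e0: "A*A*s \<le> A*A*(D*D*A - D*m + D*D)" using H1 by (simp add: mult_left_mono)
      have e0': "A*A*(D*D*A - D*m + D*D) = A*A*D*D*A - A*A*(D*m) + A*A*D*D" by (simp add: algebra_simps)
      have e1: "A*A*s \<le> A*A*D*D*A - A*D*D*b + A*A*D*D" using e0 e0' H3 by linarith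
      have e2: "(A*D - D)*(A*D - D) \<le> A*A*s - 2*A*D*(D*A) + b*D*D" using H2 by (simp add: power2_eq_square)
      have eq: "D*D*((A-1)*(A*A-A+1)) - D*D*((A-1)*b) = (A*A*D*D*A - A*D*D*b + A*A*D*D - A*A*s) + (A*A*s - 2*A*D*(D*A) + b*D*D - (A*D - D)*(A*D - D))"
        by (simp add: algebra_simps)
      show ?thesis using e1 e2 eq by linarith
    qed
    hence "(A - 1)*b \<le> (A-1)*(A*A - A + 1)" using Dpos by simp
    hence "b \<le> A*A - A + 1" using a2 A_def by simp
    moreover have aa: "a \<le> a*a" using a2 by simp
    moreover have "real (a*a - a + 1) = A*A - A + 1" using aa by (simp add: A_def of_nat_diff)
    ultimately have "real (card V) \<le> real (a*a - a + 1)" by (simp add: b_def)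
    hence "card V \<le> a*a - a + 1" by (simp only: of_nat_le_iff)
    thus ?thesis by (simp add: power2_eq_square)
  qed
qed



lemma group_actionI':
  fixes Q (structure)
  assumes grp: "group Q"
    and closed: "\<And>q y. q \<in> carrier Q \<Longrightarrow> y \<in> Ys \<Longrightarrow> f q y \<in> Ys"
    and one: "\<And>y. y \<in> Ys \<Longrightarrow> f \<one>\<^bsub>Q\<^esub> y = y"
    and mult: "\<And>q r y. q \<in> carrier Q \<Longrightarrow> r \<in> carrier Q \<Longrightarrow> y \<in> Ys \<Longrightarrow> f (q \<otimes>\<^bsub>Q\<^esub> r) y = f q (f r y)"
  shows "group_action Q Ys (\<lambda>q. \<lambda>y\<in>Ys. f q y)"
proof -
  interpret Q: group Q by (rule grp)
  have bij: "(\<lambda>y\<in>Ys. f q y) \<in> Bij Ys" if q: "q \<in> carrier Q" for q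
  proof -
    have inv1: "f (inv\<^bsub>Q\<^esub> q) (f q y) = y" if "y \<in> Ys" for y
      using mult[of "inv\<^bsub>Q\<^esub> q" q y] one[OF that] q that by simp
    have inv2: "f q (f (inv\<^bsub>Q\<^esub> q) y) = y" if "y \<in> Ys" for y
      using mult[of q "inv\<^bsub>Q\<^esub> q" y] one[OF that] q that by simp
    have iq: "inv\<^bsub>Q\<^esub> q \<in> carrier Q" using q by simp
    have "bij_betw (f q) Ys Ys"
      by (rule bij_betw_byWitness[where f'="f (inv\<^bsub>Q\<^esub> q)"])
         (use inv1 inv2 closed[OF q] closed[OF iq] in blast)+
    moreover have "bij_betw (\<lambda>y\<in>Ys. f q y) Ys Ys = bij_betw (f q) Ys Ys"
      by (rule bij_betw_cong) simp
    ultimately have "bij_betw (\<lambda>y\<in>Ys. f q y) Ys Ys" by simp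
    thus ?thesis unfolding Bij_def by simp
  qed
  have "(\<lambda>q. \<lambda>y\<in>Ys. f q y) \<in> hom Q (BijGroup Ys)"
  proof (rule homI)
    fix q assume "q \<in> carrier Q" thus "(\<lambda>y\<in>Ys. f q y) \<in> carrier (BijGroup Ys)"
      using bij by (simp add: BijGroup_def)
  next
    fix q r assume q: "q \<in> carrier Q" and r: "r \<in> carrier Q"
    have "(\<lambda>y\<in>Ys. f q y) \<otimes>\<^bsub>BijGroup Ys\<^esub> (\<lambda>y\<in>Ys. f r y) = compose Ys (\<lambda>y\<in>Ys. f q y) (\<lambda>y\<in>Ys. f r y)"
      using bij[OF q] bij[OF r] by (simp add: BijGroup_def)
    also have "\<dots> = (\<lambda>y\<in>Ys. f (q \<otimes>\<^bsub>Q\<^esub> r) y)"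
      unfolding compose_def using closed[OF r] mult[OF q r] by (intro restrict_ext) simp
    finally show "(\<lambda>y\<in>Ys. f (q \<otimes>\<^bsub>Q\<^esub> r) y) = (\<lambda>y\<in>Ys. f q y) \<otimes>\<^bsub>BijGroup Ys\<^esub> (\<lambda>y\<in>Ys. f r y)" by simp
  qed
  thus ?thesis unfolding group_action_def group_hom_def group_hom_axioms_def
    using grp group_BijGroup by blast
qed

lemma (in group_action) pgroup_fixed_point:
  assumes "finite E" "finite (carrier G)" "Coset.order G = p ^ k" "Factorial_Ring.prime p" "\<not> p dvd card E"
  shows "\<exists>y\<in>E. \<forall>g\<in>carrier G. \<phi> g y = y"
proof (rule ccontr)
  assume nf: "\<not> ?thesis"
  have "p dvd card (orbit G \<phi> y)" if y: "y \<in> E" for y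
  proof -
    have "card (orbit G \<phi> y) dvd p ^ k"
      using orbit_stabilizer_theorem[OF y] assms(3) by (metis dvd_triv_left)
    then obtain i where i: "i \<le> k" "card (orbit G \<phi> y) = p ^ i"
      using assms(4) by (auto simp: divides_primepow_nat)
    have "i \<noteq> 0"
    proof
      assume "i = 0"
      hence "card (orbit G \<phi> y) = 1" using i by simp
      then obtain z where z: "orbit G \<phi> y = {z}" by (metis card_1_singletonE)
      have "y \<in> orbit G \<phi> y" by (rule orbit_refl[OF y])
      hence "orbit G \<phi> y = {y}" using z by simp
      hence "\<forall>g\<in>carrier G. \<phi> g y = y" unfolding orbit_def by blast
      thus False using nf y by blast
    qed
    thus ?thesis using i by (simp add: dvd_power)
  qed
  hence "p dvd (\<Sum>orb\<in>orbits G E \<phi>. card orb)"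
    by (intro dvd_sum) (auto simp: orbits_def)
  moreover have "(\<Sum>orb\<in>orbits G E \<phi>. card orb) = card E"
  proof -
    have "(\<Sum>orb\<in>orbits G E \<phi>. card orb) = (\<Sum>orb\<in>orbits G E \<phi>. \<Sum>x\<in>orb. (1::nat))"
      by (intro sum.cong refl) simp
    also have "\<dots> = (\<Sum>x\<in>E. (1::nat))" by (rule disjoint_sum[OF assms(1)])
    finally show ?thesis by simp
  qed
  ultimately show False using assms(5) by simp
qed

lemma (in group) sylow_conj:
  assumes fin: "finite (carrier G)" and pr: "Factorial_Ring.prime p"
    and P: "subgroup P G" and cP: "card P = p ^ multiplicity p (Coset.order G)"
    and Q: "subgroup Q G" and cQ: "card Q = p ^ k"
  shows "\<exists>g\<in>carrier G. Q \<subseteq> (\<lambda>y. g \<otimes> y \<otimes> inv g) ` P"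
proof -
  let ?Q = "G\<lparr>carrier := Q\<rparr>"
  have gQ: "group ?Q" using subgroup.subgroup_is_group[OF Q is_group] .
  have Psub: "P \<subseteq> carrier G" using P subgroup.subset by blast
  have Qsub: "Q \<subseteq> carrier G" using Q subgroup.subset by blast
  have Cc: "C \<subseteq> carrier G" if "C \<in> rcosets P" for C
    using subgroup.rcosets_carrier[OF P is_group that] .
  define f where "f = (\<lambda>q C. C #> inv q)"
  have act: "group_action ?Q (rcosets P) (\<lambda>q. \<lambda>C\<in>rcosets P. f q C)"
  proof (rule group_actionI'[OF gQ])
    fix q C assume q: "q \<in> carrier ?Q" and C: "C \<in> rcosets P"
    obtain g where g: "g \<in> carrier G" "C = P #> g" using C unfolding RCOSETS_def by blast
    have "f q C = P #> (g \<otimes> inv q)" unfolding f_def using g q Qsub Psub by (simp add: coset_mult_assoc subsetD)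
    moreover have "g \<otimes> inv q \<in> carrier G" using g q Qsub by auto
    ultimately show "f q C \<in> rcosets P" using rcosetsI[OF Psub] by simp
  next
    fix C assume C: "C \<in> rcosets P"
    show "f \<one>\<^bsub>?Q\<^esub> C = C" unfolding f_def using Cc[OF C] by simp
  next
    fix q r C assume q: "q \<in> carrier ?Q" and r: "r \<in> carrier ?Q" and C: "C \<in> rcosets P"
    have qG: "q \<in> carrier G" and rG: "r \<in> carrier G" using q r Qsub by auto
    show "f (q \<otimes>\<^bsub>?Q\<^esub> r) C = f q (f r C)"
      unfolding f_def using qG rG Cc[OF C] by (simp add: inv_mult_group coset_mult_assoc)
  qed
  have finX: "finite (rcosets P)"
  proof -
    have "rcosets P \<subseteq> Pow (carrier G)" using Cc by blast
    moreover have "finite (Pow (carrier G))" using fin by simp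
    ultimately show ?thesis by (rule finite_subset)
  qed
  have ordG: "Coset.order G \<noteq> 0" unfolding Coset.order_def using fin one_closed by auto
  have ndvd: "\<not> p dvd card (rcosets P)"
  proof
    assume "p dvd card (rcosets P)"
    then obtain c where c: "card (rcosets P) = p * c" by blast
    have "card (rcosets P) * card P = Coset.order G" using lagrange[OF P] .
    hence "p ^ Suc (multiplicity p (Coset.order G)) dvd Coset.order G" using c cP by (metis dvd_triv_left mult.assoc mult.commute power_Suc)
    hence "Suc (multiplicity p (Coset.order G)) \<le> multiplicity p (Coset.order G)"
      using multiplicity_geI[OF ordG] pr by (meson not_prime_unit)
    thus False by simp
  qed
  have oQ: "Coset.order ?Q = p ^ k" using cQ by (simp add: Coset.order_def)
  have finQ: "finite (carrier ?Q)" using fin Qsub finite_subset by auto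
  obtain C where C: "C \<in> rcosets P" and fixC: "\<And>q. q \<in> carrier ?Q \<Longrightarrow> (\<lambda>C\<in>rcosets P. f q C) C = C"
    using group_action.pgroup_fixed_point[OF act finX finQ oQ pr ndvd] by blast
  obtain g where g: "g \<in> carrier G" "C = P #> g" using C unfolding RCOSETS_def by blast
  have "Q \<subseteq> (\<lambda>y. inv g \<otimes> y \<otimes> inv (inv g)) ` P"
  proof
    fix q assume q: "q \<in> Q"
    have qG: "q \<in> carrier G" using q Qsub by auto
    have iq: "inv q \<in> carrier ?Q" using q subgroup.m_inv_closed[OF Q] by simp
    have "f (inv q) C = C" using fixC[OF iq] C by simp
    hence eq: "P #> (g \<otimes> q) = P #> g" unfolding f_def using g qG Psub by (simp add: coset_mult_assoc)
    have "g \<otimes> q \<in> P #> g" using rcos_self[of "g \<otimes> q" P] eq g qG P by simp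
    then obtain y where y: "y \<in> P" "g \<otimes> q = y \<otimes> g" unfolding r_coset_def by blast
    have yG: "y \<in> carrier G" using y Psub by auto
    have "q = inv g \<otimes> (g \<otimes> q)" using g qG by (simp add: m_assoc[symmetric])
    also have "\<dots> = inv g \<otimes> y \<otimes> inv (inv g)" using y g yG by (simp add: m_assoc)
    finally show "q \<in> (\<lambda>y. inv g \<otimes> y \<otimes> inv (inv g)) ` P" using y by blast
  qed
  thus ?thesis using g by blast
qed



definition cjs :: "('a, 'b) monoid_scheme \<Rightarrow> 'a \<Rightarrow> 'a set \<Rightarrow> 'a set" where
  "cjs G g A = (\<lambda>y. g \<otimes>\<^bsub>G\<^esub> y \<otimes>\<^bsub>G\<^esub> inv\<^bsub>G\<^esub> g) ` A"

context group begin

lemma cjs_coset: "g \<in> carrier G \<Longrightarrow> g <# A #> inv g = cjs G g A"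
  unfolding cjs_def l_coset_def r_coset_def by auto

lemma cjs_carrier: "g \<in> carrier G \<Longrightarrow> A \<subseteq> carrier G \<Longrightarrow> cjs G g A \<subseteq> carrier G"
  unfolding cjs_def by auto

lemma cjs_cjs: "g \<in> carrier G \<Longrightarrow> h \<in> carrier G \<Longrightarrow> A \<subseteq> carrier G \<Longrightarrow> cjs G g (cjs G h A) = cjs G (g \<otimes> h) A"
  unfolding cjs_def image_image
  by (intro image_cong refl) (auto simp: inv_mult_group m_assoc subsetD)

lemma cjs_one: "A \<subseteq> carrier G \<Longrightarrow> cjs G \<one> A = A"
  unfolding cjs_def by (auto simp: subsetD image_iff)

lemma cjs_inv: "g \<in> carrier G \<Longrightarrow> A \<subseteq> carrier G \<Longrightarrow> cjs G (inv g) (cjs G g A) = A"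
  by (simp add: cjs_cjs cjs_one)

lemma cjs_mono: "A \<subseteq> B \<Longrightarrow> cjs G g A \<subseteq> cjs G g B"
  unfolding cjs_def by auto

lemma cjs_inj: "g \<in> carrier G \<Longrightarrow> A \<subseteq> carrier G \<Longrightarrow> B \<subseteq> carrier G \<Longrightarrow> cjs G g A = cjs G g B \<Longrightarrow> A = B"
  using cjs_inv by metis

lemma cjs_card: "g \<in> carrier G \<Longrightarrow> A \<subseteq> carrier G \<Longrightarrow> card (cjs G g A) = card A"
  unfolding cjs_def
proof (rule card_image, rule inj_onI)
  fix y z assume "g \<in> carrier G" "A \<subseteq> carrier G" "y \<in> A" "z \<in> A" "g \<otimes> y \<otimes> inv g = g \<otimes> z \<otimes> inv g"
  thus "y = z" by (metis inv_closed m_closed r_cancel l_cancel subsetD)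
qed

lemma cjs_subgroup: "g \<in> carrier G \<Longrightarrow> subgroup A G \<Longrightarrow> subgroup (cjs G g A) G"
  using subgroup_conjugation_is_surj1[of "inv g" A] by (simp add: cjs_coset)

lemma conj_conj: "g \<in> carrier G \<Longrightarrow> h \<in> carrier G \<Longrightarrow> y \<in> carrier G \<Longrightarrow>
  g \<otimes> (h \<otimes> y \<otimes> inv h) \<otimes> inv g = (g \<otimes> h) \<otimes> y \<otimes> inv (g \<otimes> h)"
  by (simp add: inv_mult_group m_assoc)

lemma cjs_mem: "y \<in> A \<Longrightarrow> g \<otimes> y \<otimes> inv g \<in> cjs G g A"
  unfolding cjs_def by blast

end

context group_action begin

lemma conj_fix:
  assumes g: "g \<in> carrier G" and t: "t \<in> carrier G" and b: "\<beta> \<in> E" and fx: "\<phi> t \<beta> = \<beta>"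
  shows "\<phi> (g \<otimes>\<^bsub>G\<^esub> t \<otimes>\<^bsub>G\<^esub> inv\<^bsub>G\<^esub> g) (\<phi> g \<beta>) = \<phi> g \<beta>"
proof -
  interpret group G using group_hom group_hom.axioms(1) by auto
  have gb: "\<phi> g \<beta> \<in> E" using element_image[OF g b] by simp
  have "\<phi> (g \<otimes> t \<otimes> inv g) (\<phi> g \<beta>) = \<phi> (g \<otimes> t) (\<phi> (inv g) (\<phi> g \<beta>))"
    using composition_rule[OF gb, of "g \<otimes> t" "inv g"] g t by simp
  also have "\<phi> (inv g) (\<phi> g \<beta>) = \<beta>" using orbit_sym_aux[OF g b] by simp
  also have "\<phi> (g \<otimes> t) \<beta> = \<phi> g (\<phi> t \<beta>)" using composition_rule[OF b g t] .
  finally show ?thesis using fx by simp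
qed

lemma stab_conj:
  assumes g: "g \<in> carrier G" and b: "\<beta> \<in> E"
  shows "cjs G g (stabilizer G \<phi> \<beta>) \<subseteq> stabilizer G \<phi> (\<phi> g \<beta>)"
proof -
  interpret group G using group_hom group_hom.axioms(1) by auto
  show ?thesis unfolding cjs_def stabilizer_def using conj_fix[OF g _ b] g by auto
qed

lemma phi_inv_cancel:
  assumes g: "g \<in> carrier G" and b: "\<gamma> \<in> E"
  shows "\<phi> g (\<phi> (inv\<^bsub>G\<^esub> g) \<gamma>) = \<gamma>" "\<phi> (inv\<^bsub>G\<^esub> g) \<gamma> \<in> E"
proof -
  interpret group G using group_hom group_hom.axioms(1) by auto
  show "\<phi> (inv g) \<gamma> \<in> E" using element_image[of "inv g" \<gamma>] g b by simp
  show "\<phi> g (\<phi> (inv g) \<gamma>) = \<gamma>" using orbit_sym_aux[of "inv g" \<gamma>] g b \<open>\<phi> (inv g) \<gamma> \<in> E\<close> by simp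
qed

lemma subgroup_action:
  assumes "subgroup H G"
  shows "group_action (G\<lparr>carrier := H\<rparr>) E \<phi>"
proof -
  interpret group G using group_hom group_hom.axioms(1) by auto
  have "\<phi> \<in> hom (G\<lparr>carrier := H\<rparr>) (BijGroup E)"
    using group_hom unfolding group_hom_def group_hom_axioms_def hom_def
    using subgroup.subset[OF assms] by auto
  thus ?thesis unfolding group_action_def group_hom_def group_hom_axioms_def
    using subgroup.subgroup_is_group[OF assms is_group] group_BijGroup by blast
qed

end

theorem lemma2p6:
  fixes G (structure) and \<Omega> :: "'b set" and \<phi> :: "'a \<Rightarrow> 'b \<Rightarrow> 'b"
    and \<alpha> :: 'b and p :: nat and S :: "'a set" and x :: 'a
  assumes "faithful_action G \<Omega> \<phi>"
    and "transitive_action G \<Omega> \<phi>"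
    and "finite (carrier G)" and "finite \<Omega>"
    and "\<alpha> \<in> \<Omega>"
    and "Factorial_Ring.prime p"
    and "is_sylow_subgroup G p (stabilizer G \<phi> \<alpha>) S"
    and "x \<in> stabilizer G \<phi> \<alpha>"
    and "\<exists>k. group.ord G x = p ^ k"
  shows "(card (subgroup_conjugates G S) >
            card (subgroup_conjugates (G\<lparr>carrier := stabilizer G \<phi> \<alpha>\<rparr>) S) ^ 2
            - card (subgroup_conjugates (G\<lparr>carrier := stabilizer G \<phi> \<alpha>\<rparr>) S) + 1
          \<longrightarrow> (\<exists>\<beta>\<in>\<Omega>. p dvd card (orbit (G\<lparr>carrier := stabilizer G \<phi> \<alpha>\<rparr>) \<phi> \<beta>)))
       \<and> (card (elem_conjugates G x) >
            card (elem_conjugates G x \<inter> stabilizer G \<phi> \<alpha>) ^ 2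
            - card (elem_conjugates G x \<inter> stabilizer G \<phi> \<alpha>) + 1
          \<longrightarrow> (\<exists>\<beta>\<in>\<Omega>. p dvd card (orbit (G\<lparr>carrier := stabilizer G \<phi> \<alpha>\<rparr>) \<phi> \<beta>)))"
proof -
  interpret tr: transitive_action G \<Omega> \<phi> by (rule assms(2))
  interpret group G using tr.group_hom group_hom.axioms(1) by auto
  note pr = assms(6)
  define H where "H = stabilizer G \<phi> \<alpha>"
  have subH: "subgroup H G" unfolding H_def by (rule tr.stabilizer_subgroup[OF assms(5)])
  have Hc: "H \<subseteq> carrier G" using subH subgroup.subset by blast
  let ?K = "G\<lparr>carrier := H\<rparr>"
  have grpK: "group ?K" using subgroup.subgroup_is_group[OF subH is_group] .
  have finH: "finite H" using assms(3) Hc finite_subset by blast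
  have S: "subgroup S G" "S \<subseteq> H" and cS: "card S = p ^ multiplicity p (card H)"
    using assms(7) unfolding is_sylow_subgroup_def H_def by auto
  have Sc: "S \<subseteq> carrier G" using S(2) Hc by blast
  have xH: "x \<in> H" using assms(8) H_def by simp
  have xG: "x \<in> carrier G" using xH Hc by blast
  have finS: "finite (cjs G g S)" for g using finH S(2) finite_subset unfolding cjs_def by blast
  have cjsH: "cjs G h S \<subseteq> H" if "h \<in> H" for h
    unfolding cjs_def using that S(2) subH by (auto intro!: subgroup.m_closed[OF subH] subgroup.m_inv_closed[OF subH])
  have W: "\<exists>h\<in>H. Q \<subseteq> cjs G h S" if Q: "subgroup Q G" "Q \<subseteq> H" "card Q = p ^ k" for Q k
  proof -
    have QK: "subgroup Q ?K" using subgroup_incl[OF Q(1) subH Q(2)] .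
    have SK: "subgroup S ?K" using subgroup_incl[OF S(1) subH S(2)] .
    have oK: "Coset.order ?K = card H" by (simp add: Coset.order_def)
    obtain h where h: "h \<in> carrier ?K" "Q \<subseteq> (\<lambda>y. h \<otimes>\<^bsub>?K\<^esub> y \<otimes>\<^bsub>?K\<^esub> inv\<^bsub>?K\<^esub> h) ` S"
      using group.sylow_conj[OF grpK _ pr SK _ QK Q(3)] finH cS oK by auto
    have "inv\<^bsub>?K\<^esub> h = inv h" using h(1) subH by simp
    hence "Q \<subseteq> cjs G h S" using h(2) unfolding cjs_def by simp
    thus ?thesis using h(1) by auto
  qed
  define N where "N = (\<not> (\<exists>\<beta>\<in>\<Omega>. p dvd card (orbit ?K \<phi> \<beta>)))"
  have KL: "\<exists>h\<in>H. cjs G h S \<subseteq> stabilizer G \<phi> \<gamma>" if N: N and g: "\<gamma> \<in> \<Omega>" for \<gamma>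
  proof -
    interpret kga: group_action ?K \<Omega> \<phi> using tr.subgroup_action[OF subH] .
    let ?Hg = "stabilizer ?K \<phi> \<gamma>"
    have os: "card (orbit ?K \<phi> \<gamma>) * card ?Hg = card H"
      using kga.orbit_stabilizer_theorem[OF g] by (simp add: Coset.order_def)
    have nd: "\<not> p dvd card (orbit ?K \<phi> \<gamma>)" using N g unfolding N_def by auto
    have HgK: "subgroup ?Hg ?K" using kga.stabilizer_subgroup[OF g] .
    have HgG: "subgroup ?Hg G" using incl_subgroup[OF subH HgK] .
    have HgH: "?Hg \<subseteq> H" using subgroup.subset[OF HgK] by simp
    define v where "v = multiplicity p (card H)"
    have "p ^ v dvd card H" unfolding v_def by (rule multiplicity_dvd)
    moreover have "coprime (p ^ v) (card (orbit ?K \<phi> \<gamma>))"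
      using nd pr by (simp add: prime_imp_coprime coprime_power_left_iff)
    ultimately have "p ^ v dvd card ?Hg" using os by (metis coprime_dvd_mult_right_iff)
    then obtain m where m: "card ?Hg = p ^ v * m" by blast
    have grpHg: "group (G\<lparr>carrier := ?Hg\<rparr>)" using subgroup.subgroup_is_group[OF HgG is_group] .
    have finHg: "finite ?Hg" using finH HgH finite_subset by blast
    obtain P where P: "subgroup P (G\<lparr>carrier := ?Hg\<rparr>)" "card P = p ^ v"
      using sylow_thm[OF pr grpHg, of v m] m finHg by (auto simp: Coset.order_def)
    have PG: "subgroup P G" using incl_subgroup[OF HgG P(1)] .
    have PHg: "P \<subseteq> ?Hg" using subgroup.subset[OF P(1)] by simp
    obtain h where h: "h \<in> H" "P \<subseteq> cjs G h S" using W[OF PG _ P(2)] PHg HgH by blast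
    have cc: "card P = card (cjs G h S)" using cjs_card[of h S] h Hc Sc cS P(2) v_def by auto
    have "P = cjs G h S" using card_subset_eq[OF finS h(2) cc] .
    hence "cjs G h S \<subseteq> ?Hg" using PHg by simp
    moreover have "?Hg \<subseteq> stabilizer G \<phi> \<gamma>" unfolding stabilizer_def using HgH Hc by auto
    ultimately show ?thesis using h(1) by blast
  qed
  have P1: "card (subgroup_conjugates G S) > card (subgroup_conjugates ?K S) ^ 2 - card (subgroup_conjugates ?K S) + 1
      \<longrightarrow> (\<exists>\<beta>\<in>\<Omega>. p dvd card (orbit ?K \<phi> \<beta>))"
  proof (intro impI, rule ccontr)
    assume gt: "card (subgroup_conjugates G S) > card (subgroup_conjugates ?K S) ^ 2 - card (subgroup_conjugates ?K S) + 1"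
    assume "\<not> (\<exists>\<beta>\<in>\<Omega>. p dvd card (orbit ?K \<phi> \<beta>))"
    hence N: N unfolding N_def .
    define V where "V = subgroup_conjugates G S"
    have V_eq: "V = {cjs G g S | g. g \<in> carrier G}"
      unfolding V_def subgroup_conjugates_def using cjs_coset by auto
    have VK_eq: "subgroup_conjugates ?K S = {cjs G h S | h. h \<in> H}"
    proof -
      have "h <#\<^bsub>?K\<^esub> S #>\<^bsub>?K\<^esub> inv\<^bsub>?K\<^esub> h = cjs G h S" if "h \<in> H" for h
        using that subH Hc cjs_coset[of h S] by auto
      thus ?thesis unfolding subgroup_conjugates_def by auto
    qed
    define e where "e = (\<lambda>\<beta>. {T \<in> V. T \<subseteq> stabilizer G \<phi> \<beta>})"
    have VPow: "V \<subseteq> Pow (carrier G)" using V_eq cjs_carrier Sc by auto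
    have finV: "finite V" using VPow assms(3) finite_subset by (meson finite_Pow_iff)
    have Vmem: "cjs G g S \<in> V" if "g \<in> carrier G" for g using V_eq that by auto
    have SV: "S \<in> V" using Vmem[of \<one>] cjs_one[OF Sc] by simp
    have ealpha: "e \<alpha> = {cjs G h S | h. h \<in> H}"
    proof
      show "{cjs G h S | h. h \<in> H} \<subseteq> e \<alpha>"
        using cjsH Vmem Hc unfolding e_def H_def by auto
      show "e \<alpha> \<subseteq> {cjs G h S | h. h \<in> H}"
      proof
        fix T assume T: "T \<in> e \<alpha>"
        then obtain g where g: "g \<in> carrier G" "T = cjs G g S" unfolding e_def V_eq by auto
        have TH: "T \<subseteq> H" using T unfolding e_def H_def by auto
        have TG: "subgroup T G" using cjs_subgroup[OF g(1) S(1)] g(2) by simp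
        have cT: "card T = p ^ multiplicity p (card H)" using cjs_card[OF g(1) Sc] g(2) cS by simp
        obtain h where h: "h \<in> H" "T \<subseteq> cjs G h S" using W[OF TG TH cT] by blast
        have cc: "card T = card (cjs G h S)" using cT cjs_card[of h S] h(1) Hc Sc cS by auto
        have "T = cjs G h S" using card_subset_eq[OF finS h(2) cc] .
        thus "T \<in> {cjs G h S | h. h \<in> H}" using h(1) by blast
      qed
    qed
    have ea: "card (e \<alpha>) = card (subgroup_conjugates ?K S)" using ealpha VK_eq by simp
    have esub: "e \<beta> \<subseteq> V" for \<beta> unfolding e_def by auto
    have le1: "card (e \<beta>) \<le> card (e \<delta>)" if b: "\<beta> \<in> \<Omega>" and d: "\<delta> \<in> \<Omega>" for \<beta> \<delta>
    proof -
      obtain g where g: "g \<in> carrier G" "\<phi> g \<beta> = \<delta>" using tr.unique_orbit[OF b d] by blast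
      have "inj_on (cjs G g) (e \<beta>)"
        by (rule inj_onI, rule cjs_inj[OF g(1)]) (use esub VPow in blast)+
      moreover have "cjs G g ` e \<beta> \<subseteq> e \<delta>"
      proof
        fix T' assume "T' \<in> cjs G g ` e \<beta>"
        then obtain T where T: "T \<in> e \<beta>" "T' = cjs G g T" by blast
        obtain g0 where g0: "g0 \<in> carrier G" "T = cjs G g0 S" using T(1) unfolding e_def V_eq by auto
        have "T' = cjs G (g \<otimes> g0) S" using T(2) g0 g(1) cjs_cjs Sc by simp
        hence "T' \<in> V" using Vmem g g0 by simp
        moreover have "T' \<subseteq> stabilizer G \<phi> \<delta>"
          using T cjs_mono[of T "stabilizer G \<phi> \<beta>" g] tr.stab_conj[OF g(1) b] g(2) unfolding e_def by auto
        ultimately show "T' \<in> e \<delta>" unfolding e_def by simp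
      qed
      ultimately show ?thesis using card_inj_on_le finite_subset[OF esub finV] by blast
    qed
    have unif: "card (e \<beta>) = card (e \<alpha>)" if "\<beta> \<in> \<Omega>" for \<beta>
      using le1[OF that assms(5)] le1[OF assms(5) that] by simp
    define F where "F = (\<lambda>T. {\<beta>\<in>\<Omega>. T \<in> e \<beta>})"
    have le2: "card (F T) \<le> card (F T')" if T: "T \<in> V" and T': "T' \<in> V" for T T'
    proof -
      obtain g1 where g1: "g1 \<in> carrier G" "T = cjs G g1 S" using T V_eq by auto
      obtain g2 where g2: "g2 \<in> carrier G" "T' = cjs G g2 S" using T' V_eq by auto
      define g where "g = g2 \<otimes> inv g1"
      have gc: "g \<in> carrier G" using g1 g2 g_def by simp
      have "cjs G g T = cjs G (g \<otimes> g1) S" using g1 gc cjs_cjs Sc by simp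
      also have "g \<otimes> g1 = g2" using g1 g2 g_def by (simp add: m_assoc)
      finally have gT: "cjs G g T = T'" using g2 by simp
      have "inj_on (\<phi> g) (F T)" using tr.inj_prop[OF gc] unfolding F_def by (rule inj_on_subset) auto
      moreover have "\<phi> g ` F T \<subseteq> F T'"
      proof
        fix \<gamma> assume "\<gamma> \<in> \<phi> g ` F T"
        then obtain \<beta> where b: "\<beta> \<in> \<Omega>" "T \<in> e \<beta>" "\<gamma> = \<phi> g \<beta>" unfolding F_def by blast
        have "\<gamma> \<in> \<Omega>" using tr.element_image[OF gc b(1)] b(3) by simp
        moreover have "T' \<subseteq> stabilizer G \<phi> \<gamma>"
          using b cjs_mono[of T "stabilizer G \<phi> \<beta>" g] tr.stab_conj[OF gc b(1)] gT unfolding e_def by auto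
        ultimately show "\<gamma> \<in> F T'" using T' unfolding F_def e_def by simp
      qed
      moreover have "finite (F T')" unfolding F_def using assms(4) by simp
      ultimately show ?thesis using card_inj_on_le by blast
    qed
    have reg: "card {\<beta>\<in>\<Omega>. T \<in> e \<beta>} = card (F S)" if "T \<in> V" for T
      using le2[OF that SV] le2[OF SV that] unfolding F_def by simp
    have dpos: "card (F S) > 0"
    proof -
      have "\<alpha> \<in> F S" unfolding F_def e_def using assms(5) SV S(2) H_def by auto
      moreover have "finite (F S)" unfolding F_def using assms(4) by simp
      ultimately show ?thesis by (auto simp: card_gt_0_iff)
    qed
    have inter: "e \<beta> \<inter> e \<gamma> \<noteq> {}" if b: "\<beta> \<in> \<Omega>" and c: "\<gamma> \<in> \<Omega>" for \<beta> \<gamma>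
    proof -
      obtain g where g: "g \<in> carrier G" "\<phi> g \<alpha> = \<beta>" using tr.unique_orbit[OF assms(5) b] by blast
      define \<gamma>' where "\<gamma>' = \<phi> (inv g) \<gamma>"
      have c': "\<gamma>' \<in> \<Omega>" "\<phi> g \<gamma>' = \<gamma>" using tr.phi_inv_cancel[OF g(1) c] \<gamma>'_def by auto
      obtain h where h: "h \<in> H" "cjs G h S \<subseteq> stabilizer G \<phi> \<gamma>'" using KL[OF N c'(1)] by blast
      define T where "T = cjs G g (cjs G h S)"
      have "T = cjs G (g \<otimes> h) S" using T_def cjs_cjs g(1) h(1) Hc Sc by auto
      hence TV: "T \<in> V" using Vmem g(1) h(1) Hc by auto
      have "T \<subseteq> stabilizer G \<phi> \<gamma>"
        using cjs_mono[OF h(2), of g] tr.stab_conj[OF g(1) c'(1)] c'(2) T_def by auto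
      moreover have "T \<subseteq> stabilizer G \<phi> \<beta>"
        using cjs_mono[OF cjsH[OF h(1)], of g] tr.stab_conj[OF g(1) assms(5)] g(2) T_def H_def by auto
      ultimately show ?thesis using TV unfolding e_def by blast
    qed
    have Vne: "V \<noteq> {}" using SV by blast
    have "card V \<le> card (e \<alpha>) ^ 2 - card (e \<alpha>) + 1"
      by (rule comb_bound[OF finV assms(4) esub unif reg dpos inter Vne])
    thus False using gt ea V_def by simp
  qed
  have P2: "card (elem_conjugates G x) > card (elem_conjugates G x \<inter> H) ^ 2 - card (elem_conjugates G x \<inter> H) + 1
      \<longrightarrow> (\<exists>\<beta>\<in>\<Omega>. p dvd card (orbit ?K \<phi> \<beta>))"
  proof (intro impI, rule ccontr)
    assume gt: "card (elem_conjugates G x) > card (elem_conjugates G x \<inter> H) ^ 2 - card (elem_conjugates G x \<inter> H) + 1"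
    assume "\<not> (\<exists>\<beta>\<in>\<Omega>. p dvd card (orbit ?K \<phi> \<beta>))"
    hence N: N unfolding N_def .
    define V where "V = elem_conjugates G x"
    have V_eq: "V = {g \<otimes> x \<otimes> inv g | g. g \<in> carrier G}" unfolding V_def elem_conjugates_def ..
    have Vc: "V \<subseteq> carrier G" using V_eq xG by auto
    have finV: "finite V" using Vc assms(3) finite_subset by blast
    have Vmem: "g \<otimes> x \<otimes> inv g \<in> V" if "g \<in> carrier G" for g using V_eq that by auto
    have xV: "x \<in> V" using Vmem[of \<one>] xG by simp
    have Vcl: "g \<otimes> y \<otimes> inv g \<in> V" if g: "g \<in> carrier G" and y: "y \<in> V" for g y
    proof -
      obtain g0 where g0: "g0 \<in> carrier G" "y = g0 \<otimes> x \<otimes> inv g0" using y V_eq by auto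
      have "g \<otimes> y \<otimes> inv g = (g \<otimes> g0) \<otimes> x \<otimes> inv (g \<otimes> g0)" using conj_conj[OF g g0(1) xG] g0(2) by simp
      thus ?thesis using Vmem g g0 by simp
    qed
    have stc: "g \<otimes> y \<otimes> inv g \<in> stabilizer G \<phi> (\<phi> g \<beta>)" if g: "g \<in> carrier G" and b: "\<beta> \<in> \<Omega>" and y: "y \<in> stabilizer G \<phi> \<beta>" for g y \<beta>
      using tr.stab_conj[OF g b] cjs_mem[OF y, of g] by blast
    define e where "e = (\<lambda>\<beta>. V \<inter> stabilizer G \<phi> \<beta>)"
    have esub: "e \<beta> \<subseteq> V" for \<beta> unfolding e_def by auto
    have le1: "card (e \<beta>) \<le> card (e \<delta>)" if b: "\<beta> \<in> \<Omega>" and d: "\<delta> \<in> \<Omega>" for \<beta> \<delta>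
    proof -
      obtain g where g: "g \<in> carrier G" "\<phi> g \<beta> = \<delta>" using tr.unique_orbit[OF b d] by blast
      have "inj_on (\<lambda>y. g \<otimes> y \<otimes> inv g) (e \<beta>)"
      proof (rule inj_onI)
        fix y z assume "y \<in> e \<beta>" "z \<in> e \<beta>" "g \<otimes> y \<otimes> inv g = g \<otimes> z \<otimes> inv g"
        moreover have "y \<in> carrier G" "z \<in> carrier G" using \<open>y \<in> e \<beta>\<close> \<open>z \<in> e \<beta>\<close> esub Vc by auto
        ultimately show "y = z" using g(1) by (metis inv_closed m_closed r_cancel l_cancel)
      qed
      moreover have "(\<lambda>y. g \<otimes> y \<otimes> inv g) ` e \<beta> \<subseteq> e \<delta>"
        using Vcl[OF g(1)] stc[OF g(1) b] g(2) unfolding e_def by auto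
      ultimately show ?thesis using card_inj_on_le finite_subset[OF esub finV] by blast
    qed
    have unif: "card (e \<beta>) = card (e \<alpha>)" if "\<beta> \<in> \<Omega>" for \<beta>
      using le1[OF that assms(5)] le1[OF assms(5) that] by simp
    define F where "F = (\<lambda>y. {\<beta>\<in>\<Omega>. y \<in> e \<beta>})"
    have le2: "card (F y) \<le> card (F y')" if y: "y \<in> V" and y': "y' \<in> V" for y y'
    proof -
      obtain g1 where g1: "g1 \<in> carrier G" "y = g1 \<otimes> x \<otimes> inv g1" using y V_eq by auto
      obtain g2 where g2: "g2 \<in> carrier G" "y' = g2 \<otimes> x \<otimes> inv g2" using y' V_eq by auto
      define g where "g = g2 \<otimes> inv g1"
      have gc: "g \<in> carrier G" using g1 g2 g_def by simp
      have "g \<otimes> y \<otimes> inv g = (g \<otimes> g1) \<otimes> x \<otimes> inv (g \<otimes> g1)" using conj_conj[OF gc g1(1) xG] g1(2) by simp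
      also have "g \<otimes> g1 = g2" using g1 g2 g_def by (simp add: m_assoc)
      finally have gy: "g \<otimes> y \<otimes> inv g = y'" using g2 by simp
      have "inj_on (\<phi> g) (F y)" using tr.inj_prop[OF gc] unfolding F_def by (rule inj_on_subset) auto
      moreover have "\<phi> g ` F y \<subseteq> F y'"
      proof
        fix \<gamma> assume "\<gamma> \<in> \<phi> g ` F y"
        then obtain \<beta> where b: "\<beta> \<in> \<Omega>" "y \<in> e \<beta>" "\<gamma> = \<phi> g \<beta>" unfolding F_def by blast
        have "\<gamma> \<in> \<Omega>" using tr.element_image[OF gc b(1)] b(3) by simp
        moreover have "y' \<in> stabilizer G \<phi> \<gamma>" using stc[OF gc b(1), of y] b gy unfolding e_def by auto
        ultimately show "\<gamma> \<in> F y'" using y' unfolding F_def e_def by simp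
      qed
      moreover have "finite (F y')" unfolding F_def using assms(4) by simp
      ultimately show ?thesis using card_inj_on_le by blast
    qed
    have reg: "card {\<beta>\<in>\<Omega>. y \<in> e \<beta>} = card (F x)" if "y \<in> V" for y
      using le2[OF that xV] le2[OF xV that] unfolding F_def by simp
    have dpos: "card (F x) > 0"
    proof -
      have "\<alpha> \<in> F x" unfolding F_def e_def using assms(5) xV assms(8) by auto
      moreover have "finite (F x)" unfolding F_def using assms(4) by simp
      ultimately show ?thesis by (auto simp: card_gt_0_iff)
    qed
    obtain k where k: "ord x = p ^ k" using assms(9) by blast
    let ?Q = "generate G {x}"
    have QG: "subgroup ?Q G" using generate_is_subgroup[of "{x}"] xG by simp
    have QH: "?Q \<subseteq> H" using generate_subgroup_incl[of "{x}" H] xH subH by simp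
    have cQ: "card ?Q = p ^ k" using generate_pow_card[OF xG] k by simp
    obtain h where h: "h \<in> H" "?Q \<subseteq> cjs G h S" using W[OF QG QH cQ] by blast
    have "x \<in> ?Q" by (rule generate.incl) simp
    then obtain s where s: "s \<in> S" "x = h \<otimes> s \<otimes> inv h" using h(2) unfolding cjs_def by blast
    have sG: "s \<in> carrier G" using s(1) Sc by auto
    have hG: "h \<in> carrier G" using h(1) Hc by auto
    have inter: "e \<beta> \<inter> e \<gamma> \<noteq> {}" if b: "\<beta> \<in> \<Omega>" and c: "\<gamma> \<in> \<Omega>" for \<beta> \<gamma>
    proof -
      obtain g where g: "g \<in> carrier G" "\<phi> g \<alpha> = \<beta>" using tr.unique_orbit[OF assms(5) b] by blast
      define \<gamma>' where "\<gamma>' = \<phi> (inv g) \<gamma>"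
      have c': "\<gamma>' \<in> \<Omega>" "\<phi> g \<gamma>' = \<gamma>" using tr.phi_inv_cancel[OF g(1) c] \<gamma>'_def by auto
      obtain h' where h': "h' \<in> H" "cjs G h' S \<subseteq> stabilizer G \<phi> \<gamma>'" using KL[OF N c'(1)] by blast
      have h'G: "h' \<in> carrier G" using h'(1) Hc by auto
      define y0 where "y0 = h' \<otimes> s \<otimes> inv h'"
      have y0c: "y0 \<in> cjs G h' S" unfolding y0_def by (rule cjs_mem[OF s(1)])
      define kk where "kk = h' \<otimes> inv h"
      have kkG: "kk \<in> carrier G" using kk_def h'G hG by simp
      have "kk \<otimes> x \<otimes> inv kk = (kk \<otimes> h) \<otimes> s \<otimes> inv (kk \<otimes> h)" using conj_conj[OF kkG hG sG] s(2) by simp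
      also have "kk \<otimes> h = h'" using kk_def h'G hG by (simp add: m_assoc)
      finally have "y0 = kk \<otimes> x \<otimes> inv kk" using y0_def by simp
      hence y0V: "y0 \<in> V" using Vmem[OF kkG] by simp
      have y0a: "y0 \<in> stabilizer G \<phi> \<alpha>" using cjsH[OF h'(1)] y0c H_def by auto
      have y0g: "y0 \<in> stabilizer G \<phi> \<gamma>'" using h'(2) y0c by auto
      define y where "y = g \<otimes> y0 \<otimes> inv g"
      have "y \<in> V" using Vcl[OF g(1) y0V] y_def by simp
      moreover have "y \<in> stabilizer G \<phi> \<beta>" using stc[OF g(1) assms(5) y0a] g(2) y_def by simp
      moreover have "y \<in> stabilizer G \<phi> \<gamma>" using stc[OF g(1) c'(1) y0g] c'(2) y_def by simp
      ultimately show ?thesis unfolding e_def by blast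
    qed
    have Vne: "V \<noteq> {}" using xV by blast
    have "card V \<le> card (e \<alpha>) ^ 2 - card (e \<alpha>) + 1"
      by (rule comb_bound[OF finV assms(4) esub unif reg dpos inter Vne])
    thus False using gt V_def e_def H_def by simp
  qed
  show ?thesis using P1 P2 unfolding H_def by (rule conjI)
qed

end
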